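(* Let $0<q<1$ and let $|0\rangle$ be the normalized infinite-volume kink ground state with renormalized total $S^3$ equal to $0$. For every integer $x>0$, $$\langle 0|S^3_x|0\rangle=-\tfrac12+q^{2x}\sum_{k=0}^\infty(-1)^kq^{k(k+2x+1)}.$$ For every integer $x\le0$, $\langle0|S^3_x|0\rangle=-\langle0|S^3_{1-x}|0\rangle$. Moreover, there exist constants $C,c>0$ depending only on $q$ such that $p(m):=\langle0|S^3_{m-1}-S^3_m|0\rangle$ satisfies $0\le p(m)\le Ce^{-c|m|}$ for all $m\in\mathbb Z$.
   Context: Fix $0<q<1$, related to the anisotropy by $q+q^{-1}=2\Delta$ with $\Delta>1$. Let $\Omega^{+-}=\bigotimes_{x\le0}|\!\uparrow\rangle\otimes\bigotimes_{x>0}|\!\downarrow\rangle$, and let $\mathcal H$ be the incomplete tensor product space generated from it. Define the grand-canonical vector $$\psi(z)=\prod_{x\le0}(1+z^{-1}q^{-x}S^-_x)\prod_{x\ge1}(1+zq^{x}S^+_x)\,\Omega^{+-}$$ for $z\neq0$. Expand it as $\psi(z)=\sum_{n\in\mathbb Z}\psi_nz^n$. Explicitly, $\psi_n$ is the sum, over finite sets $A\subset\{x\le0\}$ and $B\subset\{x\ge1\}$ with $|B|-|A|=n$, of $\prod_{x\in A}q^{|x|}\prod_{y\in B}q^{y}$ times the vector obtained from $\Omega^{+-}$ by flipping the spins in $A\cup B$. The vector $\psi_n$ has renormalized total $S^3$ equal to $n$. The kink ground states are $|n\rangle=\psi_n/\|\psi_n\|$, $n\in\mathbb Z$. *)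

theory Defs
  imports "HOL-Analysis.Analysis"
begin

text \<open>Concrete model of the incomplete tensor product space generated from
  Omega^{+-}: it has the orthonormal basis e_D indexed by the finite sets D of
  integer sites at which the spin is flipped relative to Omega^{+-}
  (up on x \<le> 0, down on x \<ge> 1). A vector is represented by its
  (real) coefficient function on the finite subsets of the integers; all
  vectors considered here have real coefficients.\<close>

definition configs :: "int set set" where
  "configs = {D. finite D}"

definition inner_vec :: "(int set \<Rightarrow> real) \<Rightarrow> (int set \<Rightarrow> real) \<Rightarrow> real" where
  "inner_vec u v = (\<Sum>\<^sub>\<infinity>D\<in>configs. u D * v D)"

definition norm_vec :: "(int set \<Rightarrow> real) \<Rightarrow> real" where
  "norm_vec u = sqrt (inner_vec u u)"

definition spin3 :: "int \<Rightarrow> int set \<Rightarrow> real" where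
  "spin3 x D = (if x \<le> 0 then 1/2 else -1/2) * (if x \<in> D then -1 else 1)"

definition S3 :: "int \<Rightarrow> (int set \<Rightarrow> real) \<Rightarrow> (int set \<Rightarrow> real)" where
  "S3 x u = (\<lambda>D. spin3 x D * u D)"

definition psi :: "real \<Rightarrow> int \<Rightarrow> (int set \<Rightarrow> real)" where
  "psi q n = (\<lambda>D. if finite D \<and>
        int (card {y\<in>D. y \<ge> 1}) - int (card {x\<in>D. x \<le> 0}) = n
      then (\<Prod>x\<in>{x\<in>D. x \<le> 0}. q ^ nat \<bar>x\<bar>) * (\<Prod>y\<in>{y\<in>D. y \<ge> 1}. q ^ nat y)
      else 0)"

definition kink :: "real \<Rightarrow> int \<Rightarrow> (int set \<Rightarrow> real)" where
  "kink q n = (\<lambda>D. psi q n D / norm_vec (psi q n))"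

definition magn :: "real \<Rightarrow> int \<Rightarrow> real" where
  "magn q x = inner_vec (kink q 0) (S3 x (kink q 0))"

end

theory Submission
  imports Defs
begin

definition Ew :: "int set \<Rightarrow> nat" where "Ew D = (\<Sum>x\<in>D. nat \<bar>x\<bar>)"
definition wt :: "real \<Rightarrow> int set \<Rightarrow> real" where "wt q D = q ^ (2 * Ew D)"
definition ch :: "int set \<Rightarrow> int" where
  "ch D = int (card {y\<in>D. y \<ge> 1}) - int (card {x\<in>D. x \<le> 0})"
definition SS :: "real \<Rightarrow> (int set \<Rightarrow> bool) \<Rightarrow> real" where
  "SS q P = (\<Sum>\<^sub>\<infinity>D\<in>{D\<in>configs. P D}. wt q D)"

lemma wt_prod: "finite D \<Longrightarrow> wt q D = (\<Prod>x\<in>D. (q^2) ^ nat \<bar>x\<bar>)"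
  unfolding wt_def Ew_def by (simp add: power_sum power_mult)

lemma wt_nonneg: "0 < q \<Longrightarrow> 0 \<le> wt q D"
  unfolding wt_def by simp

lemma geo_bound:
  fixes a :: real
  assumes "0 \<le> a" "a < 1"
  shows "(\<Sum>k\<le>N. a ^ k) \<le> 1 / (1 - a)"
proof -
  have "(\<Sum>k\<le>N. a ^ k) \<le> (\<Sum>k. a ^ k)"
    using assms by (intro sum_le_suminf) (auto intro: summable_geometric)
  also have "\<dots> = 1 / (1 - a)" using assms by (simp add: suminf_geometric)
  finally show ?thesis .
qed

lemma sum_abs_bound:
  fixes a :: real
  assumes "0 \<le> a" "a < 1"
  shows "(\<Sum>x\<in>{-int N..int N}. a ^ nat \<bar>x\<bar>) \<le> 2 / (1 - a)"
proof -
  have sub: "{-int N..int N} \<subseteq> int ` {..N} \<union> (\<lambda>k. - int k) ` {..N}"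
  proof
    fix x assume "x \<in> {-int N..int N}"
    then show "x \<in> int ` {..N} \<union> (\<lambda>k. - int k) ` {..N}"
    proof (cases "x \<ge> 0")
      case True then show ?thesis using \<open>x \<in> _\<close>
        by (auto intro!: image_eqI[where x="nat x"])
    next
      case False then show ?thesis using \<open>x \<in> _\<close>
        by (auto intro!: image_eqI[where x="nat (-x)"])
    qed
  qed
  have "(\<Sum>x\<in>{-int N..int N}. a ^ nat \<bar>x\<bar>) \<le> (\<Sum>x\<in>int ` {..N} \<union> (\<lambda>k. - int k) ` {..N}. a ^ nat \<bar>x\<bar>)"
    using assms by (intro sum_mono2[OF _ sub]) auto
  also have "\<dots> \<le> (\<Sum>x\<in>int ` {..N}. a ^ nat \<bar>x\<bar>) + (\<Sum>x\<in>(\<lambda>k. - int k) ` {..N}. a ^ nat \<bar>x\<bar>)"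
    using assms by (subst sum_Un) (auto intro!: sum_nonneg)
  also have "(\<Sum>x\<in>int ` {..N}. a ^ nat \<bar>x\<bar>) = (\<Sum>k\<le>N. a ^ k)"
    by (subst sum.reindex) (auto simp: inj_on_def)
  also have "(\<Sum>x\<in>(\<lambda>k. - int k) ` {..N}. a ^ nat \<bar>x\<bar>) = (\<Sum>k\<le>N. a ^ k)"
    by (subst sum.reindex) (auto simp: inj_on_def)
  finally show ?thesis using geo_bound[OF assms, of N] by simp
qed

lemma wt_summable:
  assumes "0 < q" "q < 1"
  shows "wt q summable_on configs"
proof (rule nonneg_bdd_above_summable_on)
  show "\<And>x. x \<in> configs \<Longrightarrow> 0 \<le> wt q x" using assms wt_nonneg by auto
  let ?a = "q^2"
  have a: "0 \<le> ?a" "?a < 1" using assms by (auto simp: power_less_one_iff)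
  show "bdd_above (sum (wt q) ` {F. F \<subseteq> configs \<and> finite F})"
  proof (rule bdd_aboveI)
    fix s assume "s \<in> sum (wt q) ` {F. F \<subseteq> configs \<and> finite F}"
    then obtain F where F: "F \<subseteq> configs" "finite F" "s = sum (wt q) F" by auto
    have fin: "finite (\<Union>F)" using F by (auto simp: configs_def)
    obtain N :: nat where N: "\<forall>x\<in>\<Union>F. \<bar>x\<bar> \<le> int N"
    proof -
      have "finite (abs ` \<Union>F)" using fin by auto
      then have "\<forall>y\<in>abs ` \<Union>F. y \<le> Max (abs ` \<Union>F)" by auto
      then show ?thesis using that[of "nat (Max (abs ` \<Union>F))"] by force
    qed
    let ?I = "{-int N..int N}"
    have FP: "F \<subseteq> Pow ?I" using N by (force simp: abs_le_iff)
    have "s \<le> (\<Sum>D\<in>Pow ?I. wt q D)"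
      unfolding F(3) using assms by (intro sum_mono2[OF _ FP]) (auto simp: wt_nonneg)
    also have "\<dots> = (\<Sum>D\<in>Pow ?I. (\<Prod>x\<in>D. ?a ^ nat \<bar>x\<bar>) * (\<Prod>x\<in>?I-D. 1))"
      by (intro sum.cong refl) (auto simp: wt_prod finite_subset)
    also have "\<dots> = (\<Prod>x\<in>?I. ?a ^ nat \<bar>x\<bar> + 1)"
      by (rule prod_add[symmetric]) simp
    also have "\<dots> \<le> (\<Prod>x\<in>?I. exp (?a ^ nat \<bar>x\<bar>))"
      by (intro prod_mono) (auto simp: add.commute exp_ge_add_one_self)
    also have "\<dots> = exp (\<Sum>x\<in>?I. ?a ^ nat \<bar>x\<bar>)" by (simp add: exp_sum)
    also have "\<dots> \<le> exp (2 / (1 - ?a))" using sum_abs_bound[OF a] by simp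
    finally show "s \<le> exp (2 / (1 - ?a))" .
  qed
qed


lemma SS_summ: "0 < q \<Longrightarrow> q < 1 \<Longrightarrow> wt q summable_on {D\<in>configs. P D}"
  by (rule summable_on_subset_banach[OF wt_summable]) auto

lemma SS_nonneg: "0 < q \<Longrightarrow> 0 \<le> SS q P"
  unfolding SS_def by (intro infsum_nonneg) (auto simp: wt_nonneg)

lemma SS_split:
  assumes "0 < q" "q < 1"
  shows "SS q P = SS q (\<lambda>D. P D \<and> Q D) + SS q (\<lambda>D. P D \<and> \<not> Q D)"
proof -
  have "{D\<in>configs. P D} = {D\<in>configs. P D \<and> Q D} \<union> {D\<in>configs. P D \<and> \<not> Q D}" by auto
  then show ?thesis unfolding SS_def
    by (simp only:) (rule infsum_Un_disjoint[OF SS_summ[OF assms] SS_summ[OF assms]], auto)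
qed

lemma SS_mono:
  assumes "0 < q" "q < 1" "\<And>D. P D \<Longrightarrow> Q D"
  shows "SS q P \<le> SS q Q"
  unfolding SS_def using assms
  by (intro infsum_mono_neutral[OF SS_summ[OF assms(1,2)] SS_summ[OF assms(1,2)]]) (auto simp: wt_nonneg)

lemma SS_ge_single:
  assumes "0 < q" "q < 1" "D0 \<in> configs" "P D0"
  shows "wt q D0 \<le> SS q P"
proof -
  have "(\<Sum>\<^sub>\<infinity>D\<in>{D0}. wt q D) \<le> SS q P"
    unfolding SS_def using assms
    by (intro infsum_mono_neutral[OF _ SS_summ[OF assms(1,2)]]) (auto simp: wt_nonneg)
  then show ?thesis by simp
qed

lemma SS_reindex:
  assumes "bij_betw f {D\<in>configs. P D} {D\<in>configs. Q D}"
    and "\<And>D. D \<in> configs \<Longrightarrow> P D \<Longrightarrow> wt q D = c * wt q (f D)"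
  shows "SS q P = c * SS q Q"
proof -
  have "SS q P = (\<Sum>\<^sub>\<infinity>D\<in>{D\<in>configs. P D}. c * wt q (f D))"
    unfolding SS_def using assms(2) by (intro infsum_cong) auto
  also have "\<dots> = c * (\<Sum>\<^sub>\<infinity>D\<in>{D\<in>configs. P D}. wt q (f D))"
    by (rule infsum_cmult_right')
  also have "(\<Sum>\<^sub>\<infinity>D\<in>{D\<in>configs. P D}. wt q (f D)) = SS q Q"
    unfolding SS_def by (rule infsum_reindex_bij_betw[OF assms(1)])
  finally show ?thesis .
qed

definition hh :: "int \<Rightarrow> int" where "hh x = (if x \<ge> 1 then 1 else -1)"

lemma ch_sum: "finite D \<Longrightarrow> ch D = (\<Sum>x\<in>D. hh x)"
proof -
  assume fin: "finite D"
  have "(\<Sum>x\<in>D. hh x) = (\<Sum>x\<in>D. (if x \<ge> 1 then 1 else 0) - (if x \<le> 0 then 1 else 0))"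
    by (intro sum.cong) (auto simp: hh_def)
  also have "\<dots> = int (card {y\<in>D. y \<ge> 1}) - int (card {x\<in>D. x \<le> 0})"
    using fin by (simp add: sum_subtractf sum.If_cases Int_def conj_commute)
  finally show ?thesis unfolding ch_def by simp
qed


definition GG :: "real \<Rightarrow> int \<Rightarrow> real" where "GG q c = SS q (\<lambda>D. ch D = c)"
definition HH :: "real \<Rightarrow> int \<Rightarrow> int \<Rightarrow> real" where "HH q c y = SS q (\<lambda>D. ch D = c \<and> y \<in> D)"

lemma configs_iff[simp]: "D \<in> configs \<longleftrightarrow> finite D" by (simp add: configs_def)

lemma Ew_remove: "finite D \<Longrightarrow> y \<in> D \<Longrightarrow> Ew D = nat \<bar>y\<bar> + Ew (D - {y})"
  unfolding Ew_def by (simp add: sum.remove)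

lemma ch_remove: "finite D \<Longrightarrow> y \<in> D \<Longrightarrow> ch D = hh y + ch (D - {y})"
  by (simp add: ch_sum sum.remove)

lemma HH_rec:
  assumes q: "0 < q" "q < 1" and y: "y \<ge> 1"
  shows "HH q c y = q ^ (2 * nat y) * (GG q (c - 1) - HH q (c - 1) y)"
proof -
  have "HH q c y = q ^ (2 * nat y) * SS q (\<lambda>D. ch D = c - 1 \<and> y \<notin> D)"
    unfolding HH_def
  proof (rule SS_reindex[where f = "\<lambda>D. D - {y}"])
    show "bij_betw (\<lambda>D. D - {y}) {D \<in> configs. ch D = c \<and> y \<in> D} {D \<in> configs. ch D = c - 1 \<and> y \<notin> D}"
    proof (rule bij_betw_byWitness[where f' = "insert y"])
      show "\<forall>a\<in>{D \<in> configs. ch D = c \<and> y \<in> D}. insert y (a - {y}) = a" by auto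
      show "\<forall>a\<in>{D \<in> configs. ch D = c - 1 \<and> y \<notin> D}. insert y a - {y} = a" by auto
      show "(\<lambda>D. D - {y}) ` {D \<in> configs. ch D = c \<and> y \<in> D} \<subseteq> {D \<in> configs. ch D = c - 1 \<and> y \<notin> D}"
        using y by (auto simp: ch_remove hh_def)
      show "insert y ` {D \<in> configs. ch D = c - 1 \<and> y \<notin> D} \<subseteq> {D \<in> configs. ch D = c \<and> y \<in> D}"
      proof safe
        fix D assume "D \<in> configs" "ch D = c - 1" "y \<notin> D"
        then show "ch (insert y D) = c" using y ch_remove[of "insert y D" y] by (auto simp: hh_def)
      qed auto
    qed
    show "wt q D = q ^ (2 * nat y) * wt q (D - {y})" if "D \<in> configs" "ch D = c \<and> y \<in> D" for D
      using that y by (auto simp: wt_def Ew_remove[of D y] power_add)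
  qed
  moreover have "GG q (c - 1) = HH q (c - 1) y + SS q (\<lambda>D. ch D = c - 1 \<and> y \<notin> D)"
    unfolding GG_def HH_def by (rule SS_split[OF q])
  ultimately show ?thesis by simp
qed

definition flip0 :: "int set \<Rightarrow> int set" where
  "flip0 D = (if 0 \<in> D then D - {0} else insert 0 D)"
definition sh :: "int set \<Rightarrow> int set" where "sh D = (\<lambda>x. x + 1) ` flip0 D"
definition ush :: "int set \<Rightarrow> int set" where "ush D = flip0 ((\<lambda>x. x - 1) ` D)"

lemma flip0_flip0[simp]: "flip0 (flip0 D) = D"
  unfolding flip0_def by auto

lemma finite_flip0[simp]: "finite (flip0 D) = finite D"
  unfolding flip0_def by auto

lemma ush_sh: "ush (sh D) = D"
  unfolding ush_def sh_def by (simp add: image_image)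

lemma sh_ush: "sh (ush D) = D"
  unfolding ush_def sh_def by (simp add: image_image)

lemma ch_sh:
  assumes "finite D" shows "ch (sh D) = ch D + 1"
proof -
  have "ch (sh D) = (\<Sum>x\<in>flip0 D. hh (x + 1))"
    unfolding sh_def using assms by (simp add: ch_sum sum.reindex inj_on_def)
  also have "\<dots> = ch D + 1"
  proof (cases "0 \<in> D")
    case True
    then have "ch D = hh 0 + (\<Sum>x\<in>D - {0}. hh x)" using assms by (simp add: ch_sum sum.remove)
    moreover have "(\<Sum>x\<in>D - {0}. hh (x + 1)) = (\<Sum>x\<in>D - {0}. hh x)"
      by (intro sum.cong) (auto simp: hh_def)
    ultimately show ?thesis using True by (simp add: flip0_def hh_def)
  next
    case False
    have "(\<Sum>x\<in>D. hh (x + 1)) = (\<Sum>x\<in>D. hh x)"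
    proof (intro sum.cong refl)
      fix x assume "x \<in> D"
      then have "x \<noteq> 0" using False by auto
      then show "hh (x + 1) = hh x" unfolding hh_def by auto
    qed
    then show ?thesis using False assms by (simp add: flip0_def hh_def ch_sum)
  qed
  finally show ?thesis .
qed

lemma Ew_sh:
  assumes "finite D" shows "int (Ew (sh D)) = int (Ew D) + ch D + 1"
proof -
  have "int (Ew (sh D)) = (\<Sum>x\<in>flip0 D. int (nat \<bar>x + 1\<bar>))"
    unfolding sh_def Ew_def using assms by (simp add: sum.reindex inj_on_def)
  also have "\<dots> = (\<Sum>x\<in>flip0 D. int (nat \<bar>x\<bar>) + hh (x + 1))"
    by (intro sum.cong) (auto simp: hh_def)
  also have "\<dots> = int (Ew (flip0 D)) + ch (sh D)"
    unfolding sh_def Ew_def using assms by (simp add: sum.distrib ch_sum sum.reindex inj_on_def)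
  also have "Ew (flip0 D) = Ew D"
    unfolding Ew_def flip0_def using assms by (auto simp: sum.remove)
  finally show ?thesis using ch_sh[OF assms] by simp
qed

lemma GG_shift:
  assumes q: "0 < q" "q < 1" and c: "c \<le> -1"
  shows "GG q c = q ^ (2 * nat (-c-1)) * GG q (c + 1)"
  unfolding GG_def
proof (rule SS_reindex[where f = sh])
  show "bij_betw sh {D \<in> configs. ch D = c} {D \<in> configs. ch D = c + 1}"
  proof (rule bij_betw_byWitness[where f' = ush])
    show "sh ` {D \<in> configs. ch D = c} \<subseteq> {D \<in> configs. ch D = c + 1}"
      using ch_sh by (auto simp: sh_def)
    show "ush ` {D \<in> configs. ch D = c + 1} \<subseteq> {D \<in> configs. ch D = c}"
    proof safe
      fix D assume "D \<in> configs" "ch D = c + 1"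
      then show "ush D \<in> configs" by (simp add: ush_def)
      then show "ch (ush D) = c" using ch_sh[of "ush D"] \<open>ch D = c + 1\<close> by (simp add: sh_ush)
    qed
  qed (auto simp: ush_sh sh_ush)
  show "wt q D = q ^ (2 * nat (- c - 1)) * wt q (sh D)" if "D \<in> configs" "ch D = c" for D
  proof -
    have "Ew D = Ew (sh D) + nat (-c - 1)" using Ew_sh[of D] that c by simp
    then show ?thesis by (simp add: wt_def power_add algebra_simps)
  qed
qed


definition rf :: "int set \<Rightarrow> int set" where "rf D = (\<lambda>x. 1 - x) ` D"

lemma rf_rf[simp]: "rf (rf D) = D"
  unfolding rf_def by (simp add: image_image)

lemma ch_rf: "finite D \<Longrightarrow> ch (rf D) = - ch D"
proof -
  assume fin: "finite D"
  have "ch (rf D) = (\<Sum>x\<in>D. hh (1 - x))"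
    unfolding rf_def using fin by (simp add: ch_sum sum.reindex inj_on_def)
  also have "\<dots> = (\<Sum>x\<in>D. - hh x)" by (intro sum.cong) (auto simp: hh_def)
  finally show ?thesis using fin by (simp add: ch_sum sum_negf)
qed

lemma Ew_rf: "finite D \<Longrightarrow> int (Ew (rf D)) = int (Ew D) - ch D"
proof -
  assume fin: "finite D"
  have "int (Ew (rf D)) = (\<Sum>x\<in>D. int (nat \<bar>1 - x\<bar>))"
    unfolding rf_def Ew_def using fin by (simp add: sum.reindex inj_on_def)
  also have "\<dots> = (\<Sum>x\<in>D. int (nat \<bar>x\<bar>) - hh x)" by (intro sum.cong) (auto simp: hh_def)
  finally show ?thesis using fin by (simp add: ch_sum sum_subtractf Ew_def)
qed

lemma HH_refl:
  assumes q: "0 < q" "q < 1"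
  shows "HH q 0 x = HH q 0 (1 - x)"
  unfolding HH_def
proof -
  have "SS q (\<lambda>D. ch D = 0 \<and> x \<in> D) = 1 * SS q (\<lambda>D. ch D = 0 \<and> 1 - x \<in> D)"
  proof (rule SS_reindex[where f = rf])
    show "bij_betw rf {D \<in> configs. ch D = 0 \<and> x \<in> D} {D \<in> configs. ch D = 0 \<and> 1 - x \<in> D}"
    proof (rule bij_betw_byWitness[where f' = rf])
      show "rf ` {D \<in> configs. ch D = 0 \<and> x \<in> D} \<subseteq> {D \<in> configs. ch D = 0 \<and> 1 - x \<in> D}"
        by (auto simp: ch_rf) (auto simp: rf_def)
      show "rf ` {D \<in> configs. ch D = 0 \<and> 1 - x \<in> D} \<subseteq> {D \<in> configs. ch D = 0 \<and> x \<in> D}"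
        by (auto simp: ch_rf) (auto simp: rf_def image_iff intro!: bexI[where x="1-x"])
    qed auto
    show "wt q D = 1 * wt q (rf D)" if "D \<in> configs" "ch D = 0 \<and> x \<in> D" for D
    proof -
      have "Ew (rf D) = Ew D" using Ew_rf[of D] that by simp
      then show ?thesis by (simp add: wt_def)
    qed
  qed
  then show "SS q (\<lambda>D. ch D = 0 \<and> x \<in> D) = SS q (\<lambda>D. ch D = 0 \<and> 1 - x \<in> D)" by simp
qed

lemma HH_mono:
  assumes q: "0 < q" "q < 1" and y: "y \<ge> 1"
  shows "HH q 0 (y + 1) \<le> HH q 0 y"
proof -
  let ?S = "SS q"
  have e1: "HH q 0 y = ?S (\<lambda>D. (ch D = 0 \<and> y \<in> D) \<and> y + 1 \<in> D) + ?S (\<lambda>D. (ch D = 0 \<and> y \<in> D) \<and> y + 1 \<notin> D)"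
    unfolding HH_def by (rule SS_split[OF q])
  have e2: "HH q 0 (y + 1) = ?S (\<lambda>D. (ch D = 0 \<and> y + 1 \<in> D) \<and> y \<in> D) + ?S (\<lambda>D. (ch D = 0 \<and> y + 1 \<in> D) \<and> y \<notin> D)"
    unfolding HH_def by (rule SS_split[OF q])
  have e3: "?S (\<lambda>D. (ch D = 0 \<and> y + 1 \<in> D) \<and> y \<in> D) = ?S (\<lambda>D. (ch D = 0 \<and> y \<in> D) \<and> y + 1 \<in> D)"
    by (simp add: SS_def conj_commute conj_left_commute)
  have e4: "?S (\<lambda>D. (ch D = 0 \<and> y + 1 \<in> D) \<and> y \<notin> D) = q^2 * ?S (\<lambda>D. (ch D = 0 \<and> y \<in> D) \<and> y + 1 \<notin> D)"
  proof (rule SS_reindex[where f = "\<lambda>D. insert y (D - {y + 1})"])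
    show "bij_betw (\<lambda>D. insert y (D - {y + 1})) {D \<in> configs. (ch D = 0 \<and> y + 1 \<in> D) \<and> y \<notin> D}
      {D \<in> configs. (ch D = 0 \<and> y \<in> D) \<and> y + 1 \<notin> D}"
    proof (rule bij_betw_byWitness[where f' = "\<lambda>D. insert (y + 1) (D - {y})"])
      show "(\<lambda>D. insert y (D - {y + 1})) ` {D \<in> configs. (ch D = 0 \<and> y + 1 \<in> D) \<and> y \<notin> D}
        \<subseteq> {D \<in> configs. (ch D = 0 \<and> y \<in> D) \<and> y + 1 \<notin> D}"
      proof safe
        fix D assume D: "D \<in> configs" "ch D = 0" "y + 1 \<in> D" "y \<notin> D"
        have "ch (insert y (D - {y + 1})) = hh y + ch (D - {y + 1})"
          using D ch_remove[of "insert y (D - {y + 1})" y] by simp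
        also have "\<dots> = ch D" using D ch_remove[of D "y + 1"] y by (simp add: hh_def)
        finally show "ch (insert y (D - {y + 1})) = 0" using D by simp
      qed auto
      show "(\<lambda>D. insert (y + 1) (D - {y})) ` {D \<in> configs. (ch D = 0 \<and> y \<in> D) \<and> y + 1 \<notin> D}
        \<subseteq> {D \<in> configs. (ch D = 0 \<and> y + 1 \<in> D) \<and> y \<notin> D}"
      proof safe
        fix D assume D: "D \<in> configs" "ch D = 0" "y \<in> D" "y + 1 \<notin> D"
        have "ch (insert (y + 1) (D - {y})) = hh (y + 1) + ch (D - {y})"
          using D ch_remove[of "insert (y + 1) (D - {y})" "y + 1"] by simp
        also have "\<dots> = ch D" using D ch_remove[of D y] y by (simp add: hh_def)
        finally show "ch (insert (y + 1) (D - {y})) = 0" using D by simp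
      qed auto
    qed auto
    show "wt q D = q\<^sup>2 * wt q (insert y (D - {y + 1}))"
      if "D \<in> configs" "(ch D = 0 \<and> y + 1 \<in> D) \<and> y \<notin> D" for D
    proof -
      have "Ew D = nat \<bar>y + 1\<bar> + Ew (D - {y + 1})" using that Ew_remove by simp
      moreover have "Ew (insert y (D - {y + 1})) = nat \<bar>y\<bar> + Ew (D - {y + 1})"
        using that Ew_remove[of "insert y (D - {y + 1})" y] by simp
      ultimately have "Ew D = Ew (insert y (D - {y + 1})) + 1" using y by simp
      then show ?thesis by (simp add: wt_def power_add power2_eq_square)
    qed
  qed
  have "0 \<le> ?S (\<lambda>D. (ch D = 0 \<and> y \<in> D) \<and> y + 1 \<notin> D)" by (rule SS_nonneg[OF q(1)])
  moreover have "q^2 \<le> 1" using q by (simp add: power_le_one)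
  ultimately have "q^2 * ?S (\<lambda>D. (ch D = 0 \<and> y \<in> D) \<and> y + 1 \<notin> D) \<le> ?S (\<lambda>D. (ch D = 0 \<and> y \<in> D) \<and> y + 1 \<notin> D)"
    by (simp add: mult_left_le_one_le)
  then show ?thesis using e1 e2 e3 e4 by linarith
qed


lemma HH_pair:
  assumes q: "0 < q" "q < 1"
  shows "HH q 0 0 + HH q 0 1 \<le> GG q 0"
proof -
  let ?S = "SS q"
  let ?P = "\<lambda>a b D. ch D = 0 \<and> (0 \<in> D \<longleftrightarrow> a) \<and> (1 \<in> D \<longleftrightarrow> b)"
  have ssc: "\<And>P Q. (\<And>D. P D = Q D) \<Longrightarrow> ?S P = ?S Q" by (simp add: SS_def)
  have h0: "HH q 0 0 = ?S (?P True True) + ?S (?P True False)"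
    unfolding HH_def by (subst SS_split[OF q, where Q = "\<lambda>D. 1 \<in> D"]) (intro arg_cong2[where f="(+)"] ssc; auto)
  have h1: "HH q 0 1 = ?S (?P True True) + ?S (?P False True)"
    unfolding HH_def by (subst SS_split[OF q, where Q = "\<lambda>D. 0 \<in> D"]) (intro arg_cong2[where f="(+)"] ssc; auto)
  have g0: "GG q 0 = HH q 0 0 + ?S (\<lambda>D. ch D = 0 \<and> 0 \<notin> D)"
    unfolding GG_def HH_def by (rule SS_split[OF q])
  have g1: "?S (\<lambda>D. ch D = 0 \<and> 0 \<notin> D) = ?S (?P False True) + ?S (?P False False)"
    by (subst SS_split[OF q, where Q = "\<lambda>D. 1 \<in> D"]) (intro arg_cong2[where f="(+)"] ssc; auto)
  have e: "?S (?P True True) = q^2 * ?S (?P False False)"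
  proof (rule SS_reindex[where f = "\<lambda>D. D - {0, 1}"])
    show "bij_betw (\<lambda>D. D - {0, 1}) {D \<in> configs. ?P True True D} {D \<in> configs. ?P False False D}"
    proof (rule bij_betw_byWitness[where f' = "\<lambda>D. insert 0 (insert 1 D)"])
      show "(\<lambda>D. D - {0, 1}) ` {D \<in> configs. ?P True True D} \<subseteq> {D \<in> configs. ?P False False D}"
      proof safe
        fix D assume D: "D \<in> configs" "ch D = 0" "0 \<in> D" "1 \<in> D"
        have "ch D = hh 0 + ch (D - {0})" using D ch_remove by simp
        also have "ch (D - {0}) = hh 1 + ch (D - {0} - {1})" using D ch_remove[of "D - {0}" 1] by simp
        finally have "ch (D - {0, 1}) = 0" using D by (simp add: hh_def Diff_insert2[symmetric])
        then show "ch (D - {0, 1}) = 0" .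
      qed auto
      show "(\<lambda>D. insert 0 (insert 1 D)) ` {D \<in> configs. ?P False False D} \<subseteq> {D \<in> configs. ?P True True D}"
      proof safe
        fix D assume D: "D \<in> configs" "ch D = 0" "0 \<notin> D" "1 \<notin> D"
        have "ch (insert 0 (insert 1 D)) = hh 0 + ch (insert 1 D)"
          using D ch_remove[of "insert 0 (insert 1 D)" 0] by simp
        also have "ch (insert 1 D) = hh 1 + ch D" using D ch_remove[of "insert 1 D" 1] by simp
        finally show "ch (insert 0 (insert 1 D)) = 0" using D by (simp add: hh_def)
      qed auto
    qed auto
    show "wt q D = q\<^sup>2 * wt q (D - {0, 1})" if "D \<in> configs" "?P True True D" for D
    proof -
      have "Ew D = nat \<bar>0\<bar> + Ew (D - {0})" using that Ew_remove[of D 0] by simp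
      moreover have "Ew (D - {0}) = nat \<bar>1\<bar> + Ew (D - {0} - {1})" using that Ew_remove[of "D - {0}" 1] by simp
      ultimately have "Ew D = Ew (D - {0, 1}) + 1" by (simp add: Diff_insert2[symmetric])
      then show ?thesis by (simp add: wt_def power_add power2_eq_square)
    qed
  qed
  have "0 \<le> ?S (?P False False)" by (rule SS_nonneg[OF q(1)])
  moreover have "q^2 \<le> 1" using q by (simp add: power_le_one)
  ultimately have "q^2 * ?S (?P False False) \<le> ?S (?P False False)"
    by (simp add: mult_left_le_one_le)
  then show ?thesis using h0 h1 g0 g1 e by linarith
qed

lemma GG_neg:
  assumes q: "0 < q" "q < 1"
  shows "GG q (- int n) = q ^ (n * (n - 1)) * GG q 0"
proof (induction n)
  case 0 then show ?case by simp
next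
  case (Suc n)
  have "GG q (- int (Suc n)) = q ^ (2 * nat (- (- int (Suc n)) - 1)) * GG q (- int (Suc n) + 1)"
    by (rule GG_shift[OF q]) simp
  also have "\<dots> = q ^ (2 * n) * GG q (- int n)" by simp
  also have "\<dots> = q ^ (2 * n + n * (n - 1)) * GG q 0" by (simp add: Suc power_add)
  also have "2 * n + n * (n - 1) = Suc n * (Suc n - 1)" by (cases n) (auto simp: algebra_simps)
  finally show ?case .
qed

lemma GG0_pos: "0 < q \<Longrightarrow> q < 1 \<Longrightarrow> 0 < GG q 0"
  using SS_ge_single[of q "{}" "\<lambda>D. ch D = 0"] by (simp add: GG_def wt_def Ew_def ch_def)

lemma HH_le_GG: "0 < q \<Longrightarrow> q < 1 \<Longrightarrow> HH q c y \<le> GG q c"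
  unfolding HH_def GG_def by (rule SS_mono) auto

lemma HH_nonneg: "0 < q \<Longrightarrow> 0 \<le> HH q c y"
  unfolding HH_def by (rule SS_nonneg)

lemma HH_bound:
  assumes q: "0 < q" "q < 1" and y: "y \<ge> 1"
  shows "HH q 0 y \<le> q ^ (2 * nat y) * GG q 0"
proof -
  have "GG q (-1) = GG q 0" using GG_neg[OF q, of 1] by simp
  then show ?thesis using HH_rec[OF q y, of 0] HH_nonneg[OF q(1), of "-1" y] q
    by (simp add: mult_left_mono)
qed


lemma psi0:
  assumes "finite D"
  shows "psi q 0 D = (if ch D = 0 then q ^ Ew D else 0)"
proof -
  have "(\<Prod>x\<in>{x\<in>D. x \<le> 0}. q ^ nat \<bar>x\<bar>) * (\<Prod>y\<in>{y\<in>D. y \<ge> 1}. q ^ nat y)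
      = (\<Prod>x\<in>{x\<in>D. x \<le> 0}. q ^ nat \<bar>x\<bar>) * (\<Prod>y\<in>{y\<in>D. y \<ge> 1}. q ^ nat \<bar>y\<bar>)"
    by (intro arg_cong2[where f = "(*)"] prod.cong) auto
  also have "\<dots> = (\<Prod>x\<in>{x\<in>D. x \<le> 0} \<union> {y\<in>D. y \<ge> 1}. q ^ nat \<bar>x\<bar>)"
    using assms by (intro prod.union_disjoint[symmetric]) auto
  also have "{x\<in>D. x \<le> 0} \<union> {y\<in>D. y \<ge> 1} = D" by auto
  also have "(\<Prod>x\<in>D. q ^ nat \<bar>x\<bar>) = q ^ Ew D" unfolding Ew_def by (simp add: power_sum)
  finally show ?thesis using assms unfolding psi_def ch_def by simp
qed

lemma inner_psi: "inner_vec (psi q 0) (psi q 0) = GG q 0"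
  unfolding inner_vec_def GG_def SS_def
  by (rule infsum_cong_neutral) (auto simp: psi0 wt_def power_mult[symmetric] power2_eq_square[symmetric] mult.commute)

lemma magn_eq:
  assumes q: "0 < q" "q < 1"
  shows "magn q x = (\<Sum>\<^sub>\<infinity>D\<in>{D\<in>configs. ch D = 0}. spin3 x D * wt q D) / GG q 0"
proof -
  let ?N = "norm_vec (psi q 0)"
  have N2: "?N ^ 2 = GG q 0"
    unfolding norm_vec_def inner_psi using GG0_pos[OF q] by simp
  have "magn q x = (\<Sum>\<^sub>\<infinity>D\<in>{D\<in>configs. ch D = 0}. spin3 x D * wt q D / GG q 0)"
    unfolding magn_def inner_vec_def S3_def kink_def
  proof (rule infsum_cong_neutral)
    fix D assume "D \<in> configs \<inter> {D \<in> configs. ch D = 0}"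
    then have "finite D" "ch D = 0" by auto
    then show "psi q 0 D / ?N * (spin3 x D * (psi q 0 D / ?N)) = spin3 x D * wt q D / GG q 0"
      by (simp add: psi0 wt_def N2[symmetric] power_add mult_2 power2_eq_square)
  qed (auto simp: psi0)
  also have "\<dots> = (\<Sum>\<^sub>\<infinity>D\<in>{D\<in>configs. ch D = 0}. spin3 x D * wt q D) / GG q 0"
    by (simp add: divide_inverse infsum_cmult_left')
  finally show ?thesis .
qed

lemma spin_sum:
  assumes q: "0 < q" "q < 1"
  shows "(\<Sum>\<^sub>\<infinity>D\<in>{D\<in>configs. ch D = 0}. spin3 x D * wt q D)
       = (if x \<le> 0 then 1/2 else -1/2) * GG q 0 - (if x \<le> 0 then 1 else -1) * HH q 0 x"
proof -
  let ?T = "{D\<in>configs. ch D = 0}"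
  let ?s = "(if x \<le> 0 then 1/2 else -1/2) :: real"
  let ?t = "(if x \<le> 0 then 1 else -1) :: real"
  let ?g = "\<lambda>D. if x \<in> D then wt q D else 0"
  have sw: "wt q summable_on ?T" by (rule SS_summ[OF q])
  have sg: "?g summable_on ?T"
    by (rule summable_on_comparison_test[OF sw]) (auto simp: wt_nonneg q)
  have g: "(\<Sum>\<^sub>\<infinity>D\<in>?T. ?g D) = HH q 0 x"
    unfolding HH_def SS_def by (rule infsum_cong_neutral) auto
  have "(\<Sum>\<^sub>\<infinity>D\<in>?T. spin3 x D * wt q D) = (\<Sum>\<^sub>\<infinity>D\<in>?T. ?s * wt q D + (- ?t) * ?g D)"
    by (intro infsum_cong) (auto simp: spin3_def)
  also have "\<dots> = (\<Sum>\<^sub>\<infinity>D\<in>?T. ?s * wt q D) + (\<Sum>\<^sub>\<infinity>D\<in>?T. (- ?t) * ?g D)"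
    by (intro infsum_add summable_on_cmult_right sw sg)
  also have "\<dots> = ?s * GG q 0 - ?t * HH q 0 x"
    by (simp only: infsum_cmult_right' g) (simp add: GG_def SS_def)
  finally show ?thesis .
qed

lemma magn_pos:
  assumes q: "0 < q" "q < 1" and x: "x > 0"
  shows "magn q x = -1/2 + HH q 0 x / GG q 0"
proof -
  have "GG q 0 \<noteq> 0" using GG0_pos[OF q] by simp
  then show ?thesis unfolding magn_eq[OF q] spin_sum[OF q] using x by (simp add: field_simps)
qed

lemma magn_nonpos:
  assumes q: "0 < q" "q < 1" and x: "x \<le> 0"
  shows "magn q x = 1/2 - HH q 0 x / GG q 0"
proof -
  have "GG q 0 \<noteq> 0" using GG0_pos[OF q] by simp
  then show ?thesis unfolding magn_eq[OF q] spin_sum[OF q] using x by (simp add: field_simps)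
qed


lemma HH_expand:
  assumes q: "0 < q" "q < 1" and y: "y \<ge> 1"
  shows "HH q 0 y = (\<Sum>k<n. (-1)^k * q^(2 * nat y * (k+1)) * GG q (- int (k+1)))
           + (-1)^n * q^(2 * nat y * n) * HH q (- int n) y"
proof (induction n)
  case 0 then show ?case by simp
next
  case (Suc n)
  have r: "HH q (- int n) y = q ^ (2 * nat y) * (GG q (- int (Suc n)) - HH q (- int (Suc n)) y)"
  proof -
    have e: "- int n - 1 = - int (Suc n)" by simp
    show ?thesis using HH_rec[OF q y, of "- int n"] unfolding e .
  qed
  show ?case unfolding Suc.IH r
    by (simp add: algebra_simps power_add)
qed

lemma div_helper: "(c::real) > 0 \<Longrightarrow> X = c * S \<Longrightarrow> S = X / c"
  by simp

lemma series:
  assumes q: "0 < q" "q < 1" and y: "y \<ge> 1"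
  shows "(\<lambda>k. (-1) ^ k * q ^ (k * (k + 2 * nat y + 1))) sums (HH q 0 y / (GG q 0 * q ^ (2 * nat y)))"
proof -
  let ?Y = "nat y"
  let ?c = "GG q 0 * q ^ (2 * ?Y)"
  let ?R = "\<lambda>n. (-1)^n * q^(2 * ?Y * n) * HH q (- int n) y"
  have c: "?c > 0" using GG0_pos[OF q] q by simp
  have trm: "(-1)^k * q^(2 * ?Y * (k+1)) * GG q (- int (k+1)) = ?c * ((-1) ^ k * q ^ (k * (k + 2 * ?Y + 1)))" for k
  proof -
    have "GG q (- int (k+1)) = q ^ ((k+1) * k) * GG q 0" using GG_neg[OF q, of "k+1"] by simp
    moreover have "2 * ?Y * (k+1) + (k+1) * k = 2 * ?Y + k * (k + 2 * ?Y + 1)" by (simp add: algebra_simps)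
    ultimately show ?thesis by (simp add: power_add[symmetric] algebra_simps)
  qed
  have ps: "(\<Sum>k<n. (-1) ^ k * q ^ (k * (k + 2 * ?Y + 1))) = (HH q 0 y - ?R n) / ?c" for n
  proof -
    have "HH q 0 y - ?R n = (\<Sum>k<n. ?c * ((-1) ^ k * q ^ (k * (k + 2 * ?Y + 1))))"
      unfolding HH_expand[OF q y, of n] trm[symmetric] by simp
    also have "\<dots> = ?c * (\<Sum>k<n. (-1) ^ k * q ^ (k * (k + 2 * ?Y + 1)))"
      by (simp only: sum_distrib_left)
    finally have "HH q 0 y - ?R n = ?c * (\<Sum>k<n. (-1) ^ k * q ^ (k * (k + 2 * ?Y + 1)))" .
    then show ?thesis using c by (intro div_helper) auto
  qed
  have R0: "?R \<longlonglongrightarrow> 0"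
  proof (rule Lim_null_comparison)
    show "\<forall>\<^sub>F n in sequentially. norm (?R n) \<le> (q ^ (2 * ?Y)) ^ n * GG q 0"
    proof (rule always_eventually, rule allI)
      fix n
      have "norm (?R n) = q^(2 * ?Y * n) * HH q (- int n) y"
        using HH_nonneg[OF q(1)] q by (simp add: abs_mult power_abs)
      also have "\<dots> \<le> q^(2 * ?Y * n) * GG q (- int n)"
        using HH_le_GG[OF q] q by (intro mult_left_mono) auto
      also have "GG q (- int n) \<le> GG q 0"
        using GG_neg[OF q, of n] GG0_pos[OF q] q
        by (simp add: mult_left_le_one_le power_le_one)
      finally show "norm (?R n) \<le> (q ^ (2 * ?Y)) ^ n * GG q 0"
        using q by (simp add: power_mult mult_left_mono)
    qed
    have "q ^ (2 * ?Y) < 1" using q y by (simp add: power_less_one_iff)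
    then show "(\<lambda>n. (q ^ (2 * ?Y)) ^ n * GG q 0) \<longlonglongrightarrow> 0"
      using q by (intro tendsto_mult_left_zero LIMSEQ_power_zero) auto
  qed
  have "(\<lambda>n. (HH q 0 y - ?R n) / ?c) \<longlonglongrightarrow> (HH q 0 y - 0) / ?c"
    using c by (intro tendsto_divide tendsto_diff tendsto_const R0) (rule less_imp_neq[symmetric])
  then show ?thesis unfolding sums_def ps by simp
qed


lemma p_bound:
  assumes q: "0 < q" "q < 1"
  shows "0 \<le> magn q (m - 1) - magn q m \<and> magn q (m - 1) - magn q m \<le> q ^ (2 * nat \<bar>m\<bar>) / q^2"
proof -
  let ?G = "GG q 0"
  have G: "?G > 0" by (rule GG0_pos[OF q])
  have q2: "q^2 \<le> 1" "q^2 > 0" using q by (auto simp: power_le_one)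
  consider "m \<ge> 2" | "m = 1" | "m \<le> 0" by linarith
  then show ?thesis
  proof cases
    case 1
    have e: "magn q (m - 1) - magn q m = (HH q 0 (m - 1) - HH q 0 m) / ?G"
      using magn_pos[OF q, of "m-1"] magn_pos[OF q, of m] 1 by (simp add: diff_divide_distrib)
    have mono: "HH q 0 m \<le> HH q 0 (m - 1)" using HH_mono[OF q, of "m - 1"] 1 by simp
    have b: "HH q 0 (m - 1) \<le> q ^ (2 * nat (m - 1)) * ?G" using HH_bound[OF q, of "m - 1"] 1 by simp
    have "HH q 0 (m - 1) - HH q 0 m \<le> q ^ (2 * nat (m - 1)) * ?G"
      using b HH_nonneg[OF q(1), of 0 m] by linarith
    then have "(HH q 0 (m - 1) - HH q 0 m) / ?G \<le> q ^ (2 * nat (m - 1))"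
      using G by (simp add: divide_le_eq)
    moreover have "q ^ (2 * nat \<bar>m\<bar>) = q ^ (2 * nat (m - 1)) * q^2"
    proof -
      have "2 * nat \<bar>m\<bar> = 2 * nat (m - 1) + 2" using 1 by (simp add: abs_of_nonneg nat_diff_distrib)
      then show ?thesis by (simp add: power_add power2_eq_square)
    qed
    ultimately show ?thesis using e mono G q2 by (simp add: divide_nonneg_pos)
  next
    case 2
    have e: "magn q (m - 1) - magn q m = 1 - 2 * HH q 0 1 / ?G"
      using magn_nonpos[OF q, of 0] magn_pos[OF q, of 1] HH_refl[OF q, of 0] 2 by simp
    have "2 * HH q 0 1 \<le> ?G" using HH_pair[OF q] HH_refl[OF q, of 0] by simp
    then have "2 * HH q 0 1 / ?G \<le> 1" using G by (simp add: divide_le_eq)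
    moreover have "0 \<le> 2 * HH q 0 1 / ?G" using G HH_nonneg[OF q(1)] by simp
    ultimately show ?thesis using e 2 q2 by simp
  next
    case 3
    have e: "magn q (m - 1) - magn q m = (HH q 0 (1 - m) - HH q 0 (2 - m)) / ?G"
      using magn_nonpos[OF q, of "m-1"] magn_nonpos[OF q, of m] 3
        HH_refl[OF q, of m] HH_refl[OF q, of "m - 1"] by (simp add: diff_divide_distrib)
    have mono: "HH q 0 (2 - m) \<le> HH q 0 (1 - m)" using HH_mono[OF q, of "1 - m"] 3 by (simp add: algebra_simps)
    have b: "HH q 0 (1 - m) \<le> q ^ (2 * nat (1 - m)) * ?G" using HH_bound[OF q, of "1 - m"] 3 by simp
    have "HH q 0 (1 - m) - HH q 0 (2 - m) \<le> q ^ (2 * nat (1 - m)) * ?G"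
      using b HH_nonneg[OF q(1), of 0 "2 - m"] by linarith
    then have "(HH q 0 (1 - m) - HH q 0 (2 - m)) / ?G \<le> q ^ (2 * nat (1 - m))"
      using G by (simp add: divide_le_eq)
    moreover have "q ^ (2 * nat (1 - m)) = q ^ (2 * nat \<bar>m\<bar>) * q^2"
    proof -
      have "2 * nat (1 - m) = 2 * nat \<bar>m\<bar> + 2" using 3 by (simp add: abs_of_nonpos nat_diff_distrib)
      then show ?thesis by (simp add: power_add power2_eq_square)
    qed
    moreover have "q ^ (2 * nat \<bar>m\<bar>) * q^2 \<le> q ^ (2 * nat \<bar>m\<bar>) / q^2"
    proof -
      have "q^2 * q^2 \<le> 1" using q2 by (intro mult_le_one) auto
      then have "q ^ (2 * nat \<bar>m\<bar>) * (q^2 * q^2) \<le> q ^ (2 * nat \<bar>m\<bar>)"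
        using q by (simp add: mult_left_le_one_le)
      then show ?thesis using q2 by (simp add: le_divide_eq mult.assoc)
    qed
    ultimately show ?thesis using e mono G q2 by (simp add: divide_nonneg_pos)
  qed
qed

theorem lemmaA:
  fixes q :: real
  assumes "0 < q" and "q < 1"
  shows "(\<forall>x::int. x > 0 \<longrightarrow>
            magn q x = -1/2 + q ^ (2 * nat x) *
              (\<Sum>k. (-1) ^ k * q ^ (k * (k + 2 * nat x + 1))))
       \<and> (\<forall>x::int. x \<le> 0 \<longrightarrow> magn q x = - magn q (1 - x))
       \<and> (\<exists>C c. C > 0 \<and> c > 0 \<and>
            (\<forall>m::int. 0 \<le> magn q (m - 1) - magn q m \<and>
                      magn q (m - 1) - magn q m \<le> C * exp (- c * real_of_int \<bar>m\<bar>)))"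
proof (intro conjI allI impI)
  note q = assms
  have G: "GG q 0 > 0" by (rule GG0_pos[OF q])
  fix x :: int assume x: "x > 0"
  have s: "(\<Sum>k. (-1) ^ k * q ^ (k * (k + 2 * nat x + 1))) = HH q 0 x / (GG q 0 * q ^ (2 * nat x))"
    using series[OF q, of x] x by (simp add: sums_iff)
  show "magn q x = -1/2 + q ^ (2 * nat x) * (\<Sum>k. (-1) ^ k * q ^ (k * (k + 2 * nat x + 1)))"
    unfolding s magn_pos[OF q x] using q G by simp
next
  note q = assms
  fix x :: int assume x: "x \<le> 0"
  show "magn q x = - magn q (1 - x)"
    using magn_nonpos[OF q x] magn_pos[OF q, of "1 - x"] HH_refl[OF q, of x] x by simp
next
  note q = assms
  show "\<exists>C c. C > 0 \<and> c > 0 \<and>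
            (\<forall>m::int. 0 \<le> magn q (m - 1) - magn q m \<and>
                      magn q (m - 1) - magn q m \<le> C * exp (- c * real_of_int \<bar>m\<bar>))"
  proof (intro exI conjI allI)
    show "1 / q^2 > 0" using q by simp
    show "- 2 * ln q > 0" using q by simp
    fix m :: int
    have ex: "exp (- (- 2 * ln q) * real_of_int \<bar>m\<bar>) = q ^ (2 * nat \<bar>m\<bar>)"
    proof -
      have "- (- 2 * ln q) * real_of_int \<bar>m\<bar> = real (2 * nat \<bar>m\<bar>) * ln q" by simp
      then show ?thesis using q by (simp only: exp_of_nat_mult exp_ln)
    qed
    show "0 \<le> magn q (m - 1) - magn q m" using p_bound[OF q, of m] by simp
    show "magn q (m - 1) - magn q m \<le> 1 / q^2 * exp (- (- 2 * ln q) * real_of_int \<bar>m\<bar>)"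
      unfolding ex using p_bound[OF q, of m] by simp
  qed
qed

end
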